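(* Let $\theta\in\Theta_p(s_1,s_2)$. There exists a constant $c_0>0$, not depending on $n$ or $p$, such that for any (fixed, deterministic) classification rule $G:\mathbb R^p\to\{1,2\}$ with $L_\theta(G)<c_0$, $$L_\theta(G)^2\lesssim P_\theta(G(z)\ne L(z))-P_\theta(G^*_\theta(z)\ne L(z)).$$
   Context: Two-class Gaussian model with parameter $\theta=(\pi_1,\pi_2,\mu_1,\mu_2,\Sigma_1,\Sigma_2)$: $z$ has true label $L(z)$ with $P(L(z)=k)=\pi_k$ and $z\mid L(z)=k\sim N_p(\mu_k,\Sigma_k)$. Write $\Omega_k=\Sigma_k^{-1}$, $\delta=\mu_2-\mu_1$, $\bar\mu=(\mu_1+\mu_2)/2$, $D=\Omega_2-\Omega_1$, $\beta=\Omega_2\delta$, $Q(z;\theta)=(z-\mu_1)^\top D(z-\mu_1)-2\beta^\top(z-\bar\mu)-\log(|\Sigma_1|/|\Sigma_2|)+2\log(\pi_1/\pi_2)$; the Bayes rule is $G^*_\theta(z)=1$ if $Q(z;\theta)>0$, else $2$. Define $L_\theta(G)=P_\theta(G(z)\ne G^*_\theta(z))$. Let $f_{Q,\theta}$ be the density of $Q(z;\theta)$ with $z\sim\pi_1N_p(\mu_1,\Sigma_1)+\pi_2N_p(\mu_2,\Sigma_2)$. For fixed constants $M_0>0$, $M_1>1$, $\delta_0>0$, $M_2>0$, $c\in(0,1/2)$, $\Theta_p(s_1,s_2)$ is the set of $\theta$ with $\Sigma_1,\Sigma_2$ positive definite, $|D|_0\le s_1$, $\|\beta\|_0\le s_2$,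 $\|D\|_F,\|\beta\|_2\le M_0$, $M_1^{-1}\le\lambda_{\min}(\Sigma_k)\le\lambda_{\max}(\Sigma_k)\le M_1$ ($k=1,2$), $\sup_{|x|<\delta_0}f_{Q,\theta}(x)<M_2$, $c\le\pi_1,\pi_2\le1-c$. $a\lesssim b$ means $a\le Cb$ with $C$ depending only on these fixed constants. *)

theory Defs
  imports "HOL-Probability.Probability"
    "Jordan_Normal_Form.Gauss_Jordan_Elimination"
    "Jordan_Normal_Form.Char_Poly"
    "Jordan_Normal_Form.Determinant"
begin

text \<open>Points of R^p are functions nat => real, living in the space of the product
  measure over the index set {..<p}; vec_of converts them to JNF vectors.\<close>

definition lborel_p :: "nat \<Rightarrow> (nat \<Rightarrow> real) measure" where
  "lborel_p p = PiM {..<p} (\<lambda>_. lborel)"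

definition vec_of :: "nat \<Rightarrow> (nat \<Rightarrow> real) \<Rightarrow> real vec" where
  "vec_of p z = vec p z"

definition prec :: "real mat \<Rightarrow> real mat" where
  "prec S = the (mat_inverse S)"

definition quad :: "real mat \<Rightarrow> real vec \<Rightarrow> real" where
  "quad A x = scalar_prod x (A *\<^sub>v x)"

definition gauss_dens :: "nat \<Rightarrow> real vec \<Rightarrow> real mat \<Rightarrow> (nat \<Rightarrow> real) \<Rightarrow> real" where
  "gauss_dens p mu S z =
     exp (- quad (prec S) (vec_of p z - mu) / 2) / sqrt ((2 * pi) ^ p * det S)"

text \<open>Joint law of (z, L(z)): P(L=k) = pi_k and z | L=k ~ N_p(mu_k, Sigma_k).\<close>
definition joint :: "nat \<Rightarrow> real \<Rightarrow> real \<Rightarrow> real vec \<Rightarrow> real vec \<Rightarrow> real mat \<Rightarrow> real mat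
    \<Rightarrow> ((nat \<Rightarrow> real) \<times> nat) measure" where
  "joint p pi1 pi2 mu1 mu2 S1 S2 =
     density (lborel_p p \<Otimes>\<^sub>M count_space {1,2::nat})
       (\<lambda>(z,k). ennreal (if k = 1 then pi1 * gauss_dens p mu1 S1 z
                           else pi2 * gauss_dens p mu2 S2 z))"

definition Dmat :: "real mat \<Rightarrow> real mat \<Rightarrow> real mat" where
  "Dmat S1 S2 = prec S2 - prec S1"

definition betav :: "real vec \<Rightarrow> real vec \<Rightarrow> real mat \<Rightarrow> real vec" where
  "betav mu1 mu2 S2 = prec S2 *\<^sub>v (mu2 - mu1)"

definition Qfun :: "nat \<Rightarrow> real \<Rightarrow> real \<Rightarrow> real vec \<Rightarrow> real vec \<Rightarrow> real mat \<Rightarrow> real mat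
    \<Rightarrow> (nat \<Rightarrow> real) \<Rightarrow> real" where
  "Qfun p pi1 pi2 mu1 mu2 S1 S2 z =
     quad (Dmat S1 S2) (vec_of p z - mu1)
     - 2 * scalar_prod (betav mu1 mu2 S2) (vec_of p z - (1/2) \<cdot>\<^sub>v (mu1 + mu2))
     - ln (det S1 / det S2) + 2 * ln (pi1 / pi2)"

definition Gstar :: "nat \<Rightarrow> real \<Rightarrow> real \<Rightarrow> real vec \<Rightarrow> real vec \<Rightarrow> real mat \<Rightarrow> real mat
    \<Rightarrow> (nat \<Rightarrow> real) \<Rightarrow> nat" where
  "Gstar p pi1 pi2 mu1 mu2 S1 S2 z =
     (if Qfun p pi1 pi2 mu1 mu2 S1 S2 z > 0 then 1 else 2)"

definition pos_def :: "nat \<Rightarrow> real mat \<Rightarrow> bool" where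
  "pos_def p S \<longleftrightarrow> S \<in> carrier_mat p p \<and> S\<^sup>T = S \<and>
     (\<forall>x \<in> carrier_vec p. x \<noteq> 0\<^sub>v p \<longrightarrow> quad S x > 0)"

definition lam_min :: "real mat \<Rightarrow> real" where
  "lam_min S = Min {k. eigenvalue S k}"

definition lam_max :: "real mat \<Rightarrow> real" where
  "lam_max S = Max {k. eigenvalue S k}"

definition l0_mat :: "real mat \<Rightarrow> nat" where
  "l0_mat A = card {(i,j). i < dim_row A \<and> j < dim_col A \<and> A $$ (i,j) \<noteq> 0}"

definition l0_vec :: "real vec \<Rightarrow> nat" where
  "l0_vec v = card {i. i < dim_vec v \<and> v $ i \<noteq> 0}"

definition frob :: "real mat \<Rightarrow> real" where
  "frob A = sqrt (\<Sum>i<dim_row A. \<Sum>j<dim_col A. (A $$ (i,j))\<^sup>2)"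

definition l2 :: "real vec \<Rightarrow> real" where
  "l2 v = sqrt (\<Sum>i<dim_vec v. (v $ i)\<^sup>2)"

definition Theta :: "real \<Rightarrow> real \<Rightarrow> real \<Rightarrow> real \<Rightarrow> real \<Rightarrow> nat \<Rightarrow> nat \<Rightarrow> nat
    \<Rightarrow> (real \<times> real \<times> real vec \<times> real vec \<times> real mat \<times> real mat) set" where
  "Theta M0 M1 \<delta>0 M2 c p s1 s2 = {(pi1, pi2, mu1, mu2, S1, S2).
     mu1 \<in> carrier_vec p \<and> mu2 \<in> carrier_vec p \<and>
     pos_def p S1 \<and> pos_def p S2 \<and>
     l0_mat (Dmat S1 S2) \<le> s1 \<and> l0_vec (betav mu1 mu2 S2) \<le> s2 \<and>
     frob (Dmat S1 S2) \<le> M0 \<and> l2 (betav mu1 mu2 S2) \<le> M0 \<and>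
     1 / M1 \<le> lam_min S1 \<and> lam_min S1 \<le> lam_max S1 \<and> lam_max S1 \<le> M1 \<and>
     1 / M1 \<le> lam_min S2 \<and> lam_min S2 \<le> lam_max S2 \<and> lam_max S2 \<le> M1 \<and>
     (\<exists>f. distributed (joint p pi1 pi2 mu1 mu2 S1 S2) lborel
              (\<lambda>w. Qfun p pi1 pi2 mu1 mu2 S1 S2 (fst w)) f \<and>
          (SUP x\<in>{-\<delta>0<..<\<delta>0}. f x) < ennreal M2) \<and>
     pi1 + pi2 = 1 \<and> c \<le> pi1 \<and> pi1 \<le> 1 - c \<and> c \<le> pi2 \<and> pi2 \<le> 1 - c}"

definition Lrisk :: "nat \<Rightarrow> real \<Rightarrow> real \<Rightarrow> real vec \<Rightarrow> real vec \<Rightarrow> real mat \<Rightarrow> real mat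
    \<Rightarrow> ((nat \<Rightarrow> real) \<Rightarrow> nat) \<Rightarrow> real" where
  "Lrisk p pi1 pi2 mu1 mu2 S1 S2 G =
     measure (joint p pi1 pi2 mu1 mu2 S1 S2)
       {w \<in> space (joint p pi1 pi2 mu1 mu2 S1 S2).
          G (fst w) \<noteq> Gstar p pi1 pi2 mu1 mu2 S1 S2 (fst w)}"

definition mis_prob :: "nat \<Rightarrow> real \<Rightarrow> real \<Rightarrow> real vec \<Rightarrow> real vec \<Rightarrow> real mat \<Rightarrow> real mat
    \<Rightarrow> ((nat \<Rightarrow> real) \<Rightarrow> nat) \<Rightarrow> real" where
  "mis_prob p pi1 pi2 mu1 mu2 S1 S2 G =
     measure (joint p pi1 pi2 mu1 mu2 S1 S2)
       {w \<in> space (joint p pi1 pi2 mu1 mu2 S1 S2). G (fst w) \<noteq> snd w}"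

end

theory Submission
  imports Defs
begin

lemma quad_sum: "A \<in> carrier_mat p p \<Longrightarrow> v \<in> carrier_vec p \<Longrightarrow>
  quad A v = (\<Sum>i<p. \<Sum>j<p. v$i * A$$(i,j) * v$j)"
  unfolding quad_def scalar_prod_def
  by (auto simp: sum_distrib_left mult_mat_vec_def row_def scalar_prod_def atLeast0LessThan mult.assoc intro!: sum.cong)

lemma sumsq_pos: "v \<in> carrier_vec p \<Longrightarrow> v \<noteq> 0\<^sub>v p \<Longrightarrow> (\<Sum>i<p. (v$i)^2) > (0::real)"
proof -
  assume v: "v \<in> carrier_vec p" and nz: "v \<noteq> 0\<^sub>v p"
  obtain i where i: "i < p" "v$i \<noteq> 0"
    using nz v by (metis carrier_vecD eq_vecI index_zero_vec(1) index_zero_vec(2))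
  show ?thesis by (rule sum_pos2[of _ i]) (use i in auto)
qed

definition Mt :: "nat \<Rightarrow> real mat \<Rightarrow> real \<Rightarrow> real mat" where
  "Mt p S t = mat p p (\<lambda>(i,j). t * (if i = j then 1 else 0) + (1 - t) * S $$ (i,j))"

lemma Mt_carrier: "Mt p S t \<in> carrier_mat p p" unfolding Mt_def by auto

lemma quad_Mt: "S \<in> carrier_mat p p \<Longrightarrow> v \<in> carrier_vec p \<Longrightarrow>
  quad (Mt p S t) v = t * (\<Sum>i<p. (v$i)^2) + (1-t) * quad S v"
proof -
  assume S: "S \<in> carrier_mat p p" and v: "v \<in> carrier_vec p"
  have "quad (Mt p S t) v = (\<Sum>i<p. \<Sum>j<p. t * (if i = j then v$i * v$j else 0) + (1-t) * (v$i * S$$(i,j) * v$j))"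
    unfolding quad_sum[OF Mt_carrier v] by (intro sum.cong refl) (auto simp: Mt_def algebra_simps)
  also have "\<dots> = (\<Sum>i<p. \<Sum>j<p. t * (if i = j then v$i * v$j else 0)) + (\<Sum>i<p. \<Sum>j<p. (1-t) * (v$i * S$$(i,j) * v$j))"
    by (simp add: sum.distrib)
  also have "(\<Sum>i<p. \<Sum>j<p. t * (if i = j then v$i * v$j else 0)) = (\<Sum>i<p. t * (v$i)^2)"
    by (intro sum.cong refl) (simp add: if_distrib power2_eq_square cong: if_cong)
  also have "(\<Sum>i<p. \<Sum>j<p. (1-t) * (v$i * S$$(i,j) * v$j)) = (1-t) * quad S v"
    by (simp add: quad_sum[OF S v] sum_distrib_left)
  also have "(\<Sum>i<p. t * (v$i)^2) = t * (\<Sum>i<p. (v$i)^2)" by (simp add: sum_distrib_left)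
  finally show ?thesis .
qed

lemma Mt_nonsing: assumes pd: "pos_def p S" and t: "0 \<le> t" "t \<le> 1"
  shows "det (Mt p S t) \<noteq> 0"
proof
  assume "det (Mt p S t) = 0"
  then obtain v where v: "v \<in> carrier_vec p" "v \<noteq> 0\<^sub>v p" "Mt p S t *\<^sub>v v = 0\<^sub>v p"
    using det_0_iff_vec_prod_zero_field[OF Mt_carrier] by blast
  have S: "S \<in> carrier_mat p p" using pd unfolding pos_def_def by auto
  have "quad (Mt p S t) v = 0" unfolding quad_def v(3) using v(1) by simp
  moreover have "quad S v > 0" using pd v unfolding pos_def_def by auto
  moreover have "(\<Sum>i<p. (v$i)^2) > 0" using sumsq_pos v by auto
  ultimately show False using t quad_Mt[OF S v(1), of t]
    by (smt (verit) mult_nonneg_nonneg mult_pos_pos)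
qed

lemma det_Mt: "S \<in> carrier_mat p p \<Longrightarrow> det (Mt p S t) =
  (\<Sum>\<pi> \<in> {\<pi>. \<pi> permutes {0..<p}}. signof \<pi> * (\<Prod>i=0..<p. t * (if i = \<pi> i then 1 else 0) + (1 - t) * S $$ (i,\<pi> i)))"
  apply (subst det_def'[OF Mt_carrier])
  apply (rule sum.cong, simp)
  apply (rule arg_cong[where f="\<lambda>x. _ * x"])
  apply (rule prod.cong, simp)
  apply (auto simp: Mt_def permutes_in_image)
  done

lemma pd_det_pos: assumes pd: "pos_def p S" shows "det S > 0"
proof (rule ccontr)
  assume neg: "\<not> det S > 0"
  have S: "S \<in> carrier_mat p p" using pd unfolding pos_def_def by auto
  define f where "f t = det (Mt p S t)" for t
  have "Mt p S 0 = S" using S by (intro eq_matI) (auto simp: Mt_def)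
  hence f0: "f 0 \<le> 0" using neg by (simp add: f_def)
  have "Mt p S 1 = 1\<^sub>m p" by (intro eq_matI) (auto simp: Mt_def)
  hence f1: "f 1 = 1" by (simp add: f_def)
  have "continuous_on {0..1} f"
    unfolding f_def det_Mt[OF S] by (intro continuous_intros)
  then obtain x where "0 \<le> x" "x \<le> 1" "f x = 0"
    using IVT'[of f 0 0 1] f0 f1 by auto
  thus False using Mt_nonsing[OF pd] f_def by auto
qed

lemma prec_props: assumes pd: "pos_def p S"
  shows "prec S \<in> carrier_mat p p" "S * prec S = 1\<^sub>m p" "prec S * S = 1\<^sub>m p"
    "transpose_mat (prec S) = prec S"
proof -
  have S: "S \<in> carrier_mat p p" and St: "transpose_mat S = S" using pd unfolding pos_def_def by auto
  have "det S \<noteq> 0" using pd_det_pos[OF pd] by auto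
  from det_non_zero_imp_unit[OF S this, of "()"] have U: "S \<in> Units (ring_mat TYPE(real) p ())" .
  obtain B where B: "mat_inverse S = Some B"
    using mat_inverse(1)[OF S, of "()"] U by (cases "mat_inverse S") auto
  from mat_inverse(2)[OF S B] have B2: "S * B = 1\<^sub>m p" "B * S = 1\<^sub>m p" "B \<in> carrier_mat p p" by auto
  have pB: "prec S = B" using B by (simp add: prec_def)
  show "prec S \<in> carrier_mat p p" "S * prec S = 1\<^sub>m p" "prec S * S = 1\<^sub>m p" using B2 pB by auto
  have "transpose_mat B * S = 1\<^sub>m p"
    using arg_cong[OF B2(1), of transpose_mat] transpose_mult[OF S B2(3)] St by simp
  hence "transpose_mat B = transpose_mat B * (S * B)" using B2 by simp
  also have "\<dots> = (transpose_mat B * S) * B" using B2 S by (simp add: assoc_mult_mat[symmetric])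
  also have "\<dots> = B" using \<open>transpose_mat B * S = 1\<^sub>m p\<close> B2 by simp
  finally show "transpose_mat (prec S) = prec S" using pB by simp
qed

lemma sym_entry: "transpose_mat A = A \<Longrightarrow> A \<in> carrier_mat p p \<Longrightarrow> i < p \<Longrightarrow> j < p \<Longrightarrow> A $$ (i,j) = A $$ (j,i)"
proof -
  assume a: "transpose_mat A = A" "A \<in> carrier_mat p p" "i < p" "j < p"
  have "transpose_mat A $$ (i,j) = A $$ (j,i)" using a(2-4) by auto
  thus ?thesis using a(1) by simp
qed

lemma sym_scalar: fixes A :: "real mat" assumes "transpose_mat A = A" "A \<in> carrier_mat p p" "x \<in> carrier_vec p" "y \<in> carrier_vec p"
  shows "(A *\<^sub>v y) \<bullet> x = y \<bullet> (A *\<^sub>v x)"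
  using transpose_vec_mult_scalar[OF assms(2) assms(3) assms(4)] assms(1) by simp

lemma quad_S_le: assumes S: "S \<in> carrier_mat p p" and x: "x \<in> carrier_vec p"
  shows "quad S x \<le> (\<Sum>i<p. \<Sum>j<p. \<bar>S$$(i,j)\<bar>) * (\<Sum>k<p. (x$k)^2)"
proof -
  have "quad S x = (\<Sum>i<p. \<Sum>j<p. x$i * S$$(i,j) * x$j)" by (rule quad_sum[OF S x])
  also have "\<dots> \<le> (\<Sum>i<p. \<Sum>j<p. \<bar>S$$(i,j)\<bar> * (\<Sum>k<p. (x$k)^2))"
  proof (intro sum_mono)
    fix i j assume i: "i \<in> {..<p}" and j: "j \<in> {..<p}"
    have xi: "(x$i)^2 \<le> (\<Sum>k<p. (x$k)^2)" using i by (intro member_le_sum) auto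
    have xj: "(x$j)^2 \<le> (\<Sum>k<p. (x$k)^2)" using j by (intro member_le_sum) auto
    have "\<bar>x$i\<bar> * \<bar>x$j\<bar> \<le> (\<Sum>k<p. (x$k)^2)"
    proof (cases "\<bar>x$i\<bar> \<le> \<bar>x$j\<bar>")
      case True
      hence "\<bar>x$i\<bar> * \<bar>x$j\<bar> \<le> \<bar>x$j\<bar> * \<bar>x$j\<bar>" by (intro mult_right_mono) auto
      moreover have "\<bar>x$j\<bar> * \<bar>x$j\<bar> = (x$j)^2" by (metis power2_abs power2_eq_square)
      ultimately show ?thesis using xj by linarith
    next
      case False
      hence "\<bar>x$i\<bar> * \<bar>x$j\<bar> \<le> \<bar>x$i\<bar> * \<bar>x$i\<bar>" by (intro mult_left_mono) auto
      moreover have "\<bar>x$i\<bar> * \<bar>x$i\<bar> = (x$i)^2" by (metis power2_abs power2_eq_square)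
      ultimately show ?thesis using xi by linarith
    qed
    hence "\<bar>S$$(i,j)\<bar> * (\<bar>x$i\<bar> * \<bar>x$j\<bar>) \<le> \<bar>S$$(i,j)\<bar> * (\<Sum>k<p. (x$k)^2)"
      by (simp add: mult_left_mono)
    moreover have "x$i * S$$(i,j) * x$j \<le> \<bar>S$$(i,j)\<bar> * (\<bar>x$i\<bar> * \<bar>x$j\<bar>)"
    proof -
      have "x$i * S$$(i,j) * x$j \<le> \<bar>x$i * S$$(i,j) * x$j\<bar>" by (rule abs_ge_self)
      also have "\<dots> = \<bar>S$$(i,j)\<bar> * (\<bar>x$i\<bar> * \<bar>x$j\<bar>)" by (simp add: abs_mult)
      finally show ?thesis .
    qed
    ultimately show "x$i * S$$(i,j) * x$j \<le> \<bar>S$$(i,j)\<bar> * (\<Sum>k<p. (x$k)^2)" by linarith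
  qed
  also have "\<dots> = (\<Sum>i<p. \<Sum>j<p. \<bar>S$$(i,j)\<bar>) * (\<Sum>k<p. (x$k)^2)"
    by (simp add: sum_distrib_right)
  finally show ?thesis .
qed

lemma quad_prec_lower: assumes pd: "pos_def p S"
  shows "\<exists>K>0. \<forall>x\<in>carrier_vec p. quad (prec S) x \<ge> (\<Sum>k<p. (x$k)^2) / K"
proof -
  have S: "S \<in> carrier_mat p p" and St: "transpose_mat S = S" using pd unfolding pos_def_def by auto
  note P = prec_props[OF pd]
  define K where "K = 1 + (\<Sum>i<p. \<Sum>j<p. \<bar>S$$(i,j)\<bar>)"
  have K0: "K > 0" unfolding K_def by (intro add_pos_nonneg zero_less_one sum_nonneg) auto
  show ?thesis
  proof (intro exI[of _ K] conjI ballI K0)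
    fix x :: "real vec" assume x: "x \<in> carrier_vec p"
    define \<Omega> where "\<Omega> = prec S"
    have O: "\<Omega> \<in> carrier_mat p p" using P \<Omega>_def by auto
    define w where "w = \<Omega> *\<^sub>v x"
    define c where "c = 1 / K"
    have w: "w \<in> carrier_vec p" using O x w_def by auto
    define u where "u = w - c \<cdot>\<^sub>v x"
    have u: "u \<in> carrier_vec p" using w x u_def by auto
    have q0: "quad S u \<ge> 0"
    proof (cases "u = 0\<^sub>v p")
      case True thus ?thesis using S by (simp add: quad_def)
    next
      case False thus ?thesis using pd u unfolding pos_def_def by (auto intro: less_imp_le)
    qed
    have Sw: "S *\<^sub>v w = x" unfolding w_def \<Omega>_def
      using assoc_mult_mat_vec[OF S P(1) x, symmetric] P(2) x by simp
    have Su: "S *\<^sub>v u = x - c \<cdot>\<^sub>v (S *\<^sub>v x)"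
      unfolding u_def using S w x Sw by (simp add: mult_minus_distrib_mat_vec mult_mat_vec)
    have Sx: "S *\<^sub>v x \<in> carrier_vec p" using S x by auto
    have e1: "quad S u = u \<bullet> x - c * (u \<bullet> (S *\<^sub>v x))"
      unfolding quad_def Su using u x Sx by (simp add: scalar_prod_minus_distrib[OF u x])
    have e2: "u \<bullet> x = w \<bullet> x - c * (x \<bullet> x)"
      unfolding u_def using w x by (simp add: minus_scalar_prod_distrib)
    have e3: "u \<bullet> (S *\<^sub>v x) = w \<bullet> (S *\<^sub>v x) - c * (x \<bullet> (S *\<^sub>v x))"
      unfolding u_def using w x Sx by (simp add: minus_scalar_prod_distrib)
    have e4: "w \<bullet> (S *\<^sub>v x) = (S *\<^sub>v w) \<bullet> x"
      using sym_scalar[OF St S x w] comm_scalar_prod[OF w Sx] by simp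
    have e5: "w \<bullet> x = quad \<Omega> x" unfolding quad_def w_def
      by (rule comm_scalar_prod[OF _ x]) (use O x in auto)
    have e6: "(S *\<^sub>v w) \<bullet> x = x \<bullet> x" by (simp only: Sw)
    have e7: "x \<bullet> (S *\<^sub>v x) = quad S x" by (simp only: quad_def)
    have eq: "quad S u = quad \<Omega> x - c * (x \<bullet> x) - c * (x \<bullet> x - c * quad S x)"
      by (simp only: e1 e2 e3 e4 e5 e6 e7)
    have xx: "x \<bullet> x = (\<Sum>k<p. (x$k)^2)" using x by (simp add: scalar_prod_def power2_eq_square atLeast0LessThan)
    have qS: "quad S x \<le> (K - 1) * (x \<bullet> x)" using quad_S_le[OF S x] xx K_def by simp
    have xx0: "x \<bullet> x \<ge> 0" unfolding xx by (simp add: sum_nonneg)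
    have c0: "c > 0" unfolding c_def using K0 by simp
    have h1: "c * c * quad S x \<le> c * c * ((K - 1) * (x \<bullet> x))" using qS c0 by (intro mult_left_mono) auto
    have h2: "c * c * ((K-1) * (x \<bullet> x)) = c * (x \<bullet> x) - c * c * (x \<bullet> x)"
      unfolding c_def using K0 by (simp add: field_simps)
    have h3: "c * (x \<bullet> x - c * quad S x) = c * (x \<bullet> x) - c * c * quad S x" by (simp add: algebra_simps)
    have "quad \<Omega> x \<ge> c * (x \<bullet> x) + c * c * (x \<bullet> x)" using q0 eq h1 h2 h3 by linarith
    moreover have "c * c * (x \<bullet> x) \<ge> 0" using xx0 by simp
    ultimately have "quad \<Omega> x \<ge> c * (x \<bullet> x)" by linarith
    thus "quad (prec S) x \<ge> (\<Sum>k<p. (x$k)^2) / K" unfolding \<Omega>_def c_def xx by simp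
  qed
qed

lemma Q_sum_identity:
  fixes O1 O2 :: "nat \<Rightarrow> nat \<Rightarrow> real" and y d :: "nat \<Rightarrow> real"
  assumes sym: "\<And>i j. i < p \<Longrightarrow> j < p \<Longrightarrow> O2 i j = O2 j i"
  shows "(\<Sum>i<p. \<Sum>j<p. y i * (O2 i j - O1 i j) * y j) - 2 * (\<Sum>i<p. (\<Sum>j<p. O2 i j * d j) * (y i - d i / 2))
       = (\<Sum>i<p. \<Sum>j<p. (y i - d i) * O2 i j * (y j - d j)) - (\<Sum>i<p. \<Sum>j<p. y i * O1 i j * y j)"
proof -
  have sw: "(\<Sum>i<p. \<Sum>j<p. O2 i j * d i * y j) = (\<Sum>i<p. \<Sum>j<p. O2 i j * d j * y i)"
  proof -
    have "(\<Sum>i<p. \<Sum>j<p. O2 i j * d j * y i) = (\<Sum>j<p. \<Sum>i<p. O2 i j * d j * y i)"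
      by (rule sum.swap)
    also have "\<dots> = (\<Sum>j<p. \<Sum>i<p. O2 j i * d j * y i)"
      by (intro sum.cong refl) (simp add: sym)
    finally show ?thesis by simp
  qed
  have L: "(\<Sum>i<p. \<Sum>j<p. y i * (O2 i j - O1 i j) * y j) - 2 * (\<Sum>i<p. (\<Sum>j<p. O2 i j * d j) * (y i - d i / 2))
     = (\<Sum>i<p. \<Sum>j<p. y i * (O2 i j - O1 i j) * y j - 2 * (O2 i j * d j * (y i - d i / 2)))"
    by (simp add: sum_distrib_left sum_distrib_right sum_subtractf)
  also have "\<dots> = (\<Sum>i<p. \<Sum>j<p. ((y i - d i) * O2 i j * (y j - d j) - y i * O1 i j * y j)
        + (O2 i j * d i * y j - O2 i j * d j * y i))"
    by (intro sum.cong refl) (simp add: algebra_simps)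
  also have "\<dots> = (\<Sum>i<p. \<Sum>j<p. (y i - d i) * O2 i j * (y j - d j)) - (\<Sum>i<p. \<Sum>j<p. y i * O1 i j * y j)
        + ((\<Sum>i<p. \<Sum>j<p. O2 i j * d i * y j) - (\<Sum>i<p. \<Sum>j<p. O2 i j * d j * y i))"
    by (simp add: sum.distrib sum_subtractf)
  finally show ?thesis using sw by simp
qed

lemma sp_sum: "v \<in> carrier_vec p \<Longrightarrow> w \<in> carrier_vec p \<Longrightarrow> v \<bullet> w = (\<Sum>i<p. v$i * w$i)"
  by (simp add: scalar_prod_def atLeast0LessThan)

lemma mv_sum: "A \<in> carrier_mat p p \<Longrightarrow> v \<in> carrier_vec p \<Longrightarrow> i < p \<Longrightarrow> (A *\<^sub>v v)$i = (\<Sum>j<p. A$$(i,j) * v$j)"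
  by (simp add: mult_mat_vec_def row_def scalar_prod_def atLeast0LessThan)

definition qk :: "nat \<Rightarrow> real vec \<Rightarrow> real mat \<Rightarrow> (nat \<Rightarrow> real) \<Rightarrow> real" where
  "qk p mu S z = quad (prec S) (vec_of p z - mu)"

lemma Q_id:
  assumes pd1: "pos_def p S1" and pd2: "pos_def p S2" and m1: "mu1 \<in> carrier_vec p" and m2: "mu2 \<in> carrier_vec p"
  shows "Qfun p pi1 pi2 mu1 mu2 S1 S2 z = qk p mu2 S2 z - qk p mu1 S1 z - ln (det S1 / det S2) + 2 * ln (pi1 / pi2)"
proof -
  note P1 = prec_props[OF pd1] and P2 = prec_props[OF pd2]
  define O1 where "O1 i j = prec S1 $$ (i,j)" for i j
  define O2 where "O2 i j = prec S2 $$ (i,j)" for i j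
  define y where "y i = z i - mu1 $ i" for i
  define d where "d i = mu2 $ i - mu1 $ i" for i
  have sym: "O2 i j = O2 j i" if "i < p" "j < p" for i j
    unfolding O2_def using sym_entry[OF P2(4) P2(1) that] .
  have x: "vec_of p z \<in> carrier_vec p" by (simp add: vec_of_def)
  have D: "Dmat S1 S2 \<in> carrier_mat p p" unfolding Dmat_def using P1 P2 by auto
  have v1: "vec_of p z - mu1 \<in> carrier_vec p" using x m1 by auto
  have v2: "vec_of p z - mu2 \<in> carrier_vec p" using x m2 by auto
  have vm: "vec_of p z - (1/2) \<cdot>\<^sub>v (mu1 + mu2) \<in> carrier_vec p" using x m1 m2 by auto
  have bc: "betav mu1 mu2 S2 \<in> carrier_vec p" unfolding betav_def using P2 m1 m2 by auto
  have t1: "quad (Dmat S1 S2) (vec_of p z - mu1) = (\<Sum>i<p. \<Sum>j<p. y i * (O2 i j - O1 i j) * y j)"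
    unfolding quad_sum[OF D v1] using P1 P2 m1
    by (intro sum.cong refl) (auto simp: Dmat_def y_def O1_def O2_def vec_of_def)
  have bi: "betav mu1 mu2 S2 $ i = (\<Sum>j<p. O2 i j * d j)" if "i < p" for i
    unfolding betav_def using mv_sum[OF P2(1) _ that, of "mu2 - mu1"] m1 m2
    by (auto simp: O2_def d_def)
  have t2: "betav mu1 mu2 S2 \<bullet> (vec_of p z - (1/2) \<cdot>\<^sub>v (mu1 + mu2)) = (\<Sum>i<p. (\<Sum>j<p. O2 i j * d j) * (y i - d i / 2))"
  proof -
    have vi: "(vec_of p z - (1/2) \<cdot>\<^sub>v (mu1 + mu2)) $ i = y i - d i / 2" if "i < p" for i
      using that m1 m2 by (simp add: y_def d_def vec_of_def field_simps)
    show ?thesis unfolding sp_sum[OF bc vm] by (intro sum.cong refl) (simp add: bi vi)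
  qed
  have t3: "qk p mu2 S2 z = (\<Sum>i<p. \<Sum>j<p. (y i - d i) * O2 i j * (y j - d j))"
    unfolding qk_def quad_sum[OF P2(1) v2] using m1 m2
    by (intro sum.cong refl) (auto simp: y_def d_def O2_def vec_of_def)
  have t4: "qk p mu1 S1 z = (\<Sum>i<p. \<Sum>j<p. y i * O1 i j * y j)"
    unfolding qk_def quad_sum[OF P1(1) v1] using m1
    by (intro sum.cong refl) (auto simp: y_def O1_def vec_of_def)
  show ?thesis
    unfolding Qfun_def t1 t2 t3 t4 using Q_sum_identity[of p O2 y O1 d, OF sym] by simp
qed

lemma aux_div: "(B::real) \<noteq> 0 \<Longrightarrow> A = B * (A / B)" by simp

lemma gauss_ratio:
  assumes pd1: "pos_def p S1" and pd2: "pos_def p S2" and m1: "mu1 \<in> carrier_vec p" and m2: "mu2 \<in> carrier_vec p"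
    and pi1: "pi1 > 0" and pi2: "pi2 > 0"
  shows "pi1 * gauss_dens p mu1 S1 z > 0" "pi2 * gauss_dens p mu2 S2 z > 0"
    "pi1 * gauss_dens p mu1 S1 z = pi2 * gauss_dens p mu2 S2 z * exp (Qfun p pi1 pi2 mu1 mu2 S1 S2 z / 2)"
proof -
  have d1: "det S1 > 0" and d2: "det S2 > 0" using pd_det_pos pd1 pd2 by auto
  define c where "c = (2 * pi) ^ p"
  have c: "c > 0" unfolding c_def by simp
  have g1: "gauss_dens p mu1 S1 z = exp (- qk p mu1 S1 z / 2) / sqrt (c * det S1)"
    unfolding gauss_dens_def qk_def c_def by simp
  have g2: "gauss_dens p mu2 S2 z = exp (- qk p mu2 S2 z / 2) / sqrt (c * det S2)"
    unfolding gauss_dens_def qk_def c_def by simp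
  show a: "pi1 * gauss_dens p mu1 S1 z > 0" unfolding g1 using c d1 pi1 by simp
  show b: "pi2 * gauss_dens p mu2 S2 z > 0" unfolding g2 using c d2 pi2 by simp
  have la: "ln (pi1 * gauss_dens p mu1 S1 z) = ln pi1 - qk p mu1 S1 z / 2 - (ln c + ln (det S1)) / 2"
    unfolding g1 using c d1 pi1 by (simp add: ln_mult ln_div ln_sqrt)
  have lb: "ln (pi2 * gauss_dens p mu2 S2 z) = ln pi2 - qk p mu2 S2 z / 2 - (ln c + ln (det S2)) / 2"
    unfolding g2 using c d2 pi2 by (simp add: ln_mult ln_div ln_sqrt)
  have hQ: "Qfun p pi1 pi2 mu1 mu2 S1 S2 z / 2 = ln (pi1 * gauss_dens p mu1 S1 z) - ln (pi2 * gauss_dens p mu2 S2 z)"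
    unfolding Q_id[OF pd1 pd2 m1 m2] la lb using d1 d2 pi1 pi2 by (simp add: ln_div field_simps)
  have E: "exp (Qfun p pi1 pi2 mu1 mu2 S1 S2 z / 2) = (pi1 * gauss_dens p mu1 S1 z) / (pi2 * gauss_dens p mu2 S2 z)"
    by (simp only: hQ exp_diff exp_ln[OF a] exp_ln[OF b])
  show "pi1 * gauss_dens p mu1 S1 z = pi2 * gauss_dens p mu2 S2 z * exp (Qfun p pi1 pi2 mu1 mu2 S1 S2 z / 2)"
    unfolding E by (rule aux_div) (use b in linarith)
qed

lemma comp_meas: assumes "i < p" shows "(\<lambda>z. z i) \<in> borel_measurable (lborel_p p)"
proof -
  have "(\<lambda>z. z i) \<in> measurable (lborel_p p) lborel"
    unfolding lborel_p_def by (rule measurable_component_singleton) (use assms in auto)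
  thus ?thesis by simp
qed

lemma qk_meas: assumes S: "prec S \<in> carrier_mat p p" and m: "mu \<in> carrier_vec p"
  shows "qk p mu S \<in> borel_measurable (lborel_p p)"
proof -
  have x: "vec_of p z - mu \<in> carrier_vec p" for z using m by (auto simp: vec_of_def)
  have eq: "qk p mu S z = (\<Sum>i<p. \<Sum>j<p. (z i - mu$i) * prec S $$ (i,j) * (z j - mu$j))" for z
    unfolding qk_def quad_sum[OF S x] using m by (intro sum.cong refl) (auto simp: vec_of_def)
  show ?thesis unfolding eq[abs_def]
    by (intro borel_measurable_sum borel_measurable_times borel_measurable_diff comp_meas
        borel_measurable_const) auto
qed

lemma gauss_meas: assumes pd: "pos_def p S" and m: "mu \<in> carrier_vec p"
  shows "gauss_dens p mu S \<in> borel_measurable (lborel_p p)"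
proof -
  have "gauss_dens p mu S = (\<lambda>z. exp (- qk p mu S z / 2) / sqrt ((2 * pi) ^ p * det S))"
    by (auto simp: gauss_dens_def qk_def)
  thus ?thesis using qk_meas[OF prec_props(1)[OF pd] m] by simp
qed

lemma nd_nn: "\<sigma> > 0 \<Longrightarrow> (\<integral>\<^sup>+x. ennreal (normal_density m \<sigma> x) \<partial>lborel) = 1"
proof -
  assume s: "\<sigma> > 0"
  have i: "integrable lborel (normal_density m \<sigma>)" using integrable_normal_density[of \<sigma> m] s by simp
  have "integral\<^sup>L lborel (normal_density m \<sigma>) = 1" using integral_normal_density[of \<sigma> m] s by simp
  thus ?thesis using nn_integral_eq_integral[OF i] by simp
qed

lemma gauss_integrable: assumes pd: "pos_def p S" and m: "mu \<in> carrier_vec p"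
  shows "integrable (lborel_p p) (gauss_dens p mu S)"
proof -
  interpret product_sigma_finite "\<lambda>_. lborel" by standard
  obtain K where K: "K > 0" "\<And>x. x \<in> carrier_vec p \<Longrightarrow> quad (prec S) x \<ge> (\<Sum>k<p. (x$k)^2) / K"
    using quad_prec_lower[OF pd] by blast
  define \<sigma> where "\<sigma> = sqrt K"
  have s0: "\<sigma> > 0" unfolding \<sigma>_def using K by simp
  have s2: "\<sigma>^2 = K" unfolding \<sigma>_def using K by simp
  have d: "det S > 0" using pd_det_pos[OF pd] .
  define C where "C = sqrt (2 * pi * K) ^ p / sqrt ((2 * pi) ^ p * det S)"
  define F where "F z = (\<Prod>i<p. normal_density (mu$i) \<sigma> (z i))" for z
  have Fm: "F \<in> borel_measurable (lborel_p p)"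
    unfolding F_def by (intro borel_measurable_prod) (auto intro: measurable_compose[OF comp_meas])
  have Fi: "integrable (lborel_p p) F"
  proof (rule integrableI_nonneg[OF Fm])
    show "AE x in lborel_p p. 0 \<le> F x" by (intro AE_I2) (auto simp: F_def intro!: prod_nonneg)
    have "(\<integral>\<^sup>+x. ennreal (F x) \<partial>lborel_p p) = (\<integral>\<^sup>+x. (\<Prod>i\<in>{..<p}. ennreal (normal_density (mu$i) \<sigma> (x i))) \<partial>lborel_p p)"
      unfolding F_def by (subst prod_ennreal) auto
    also have "\<dots> = (\<Prod>i\<in>{..<p}. \<integral>\<^sup>+x. ennreal (normal_density (mu$i) \<sigma> x) \<partial>lborel)"
      unfolding lborel_p_def by (rule product_nn_integral_prod) auto
    also have "\<dots> = 1" using nd_nn[OF s0] by simp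
    finally show "(\<integral>\<^sup>+x. ennreal (F x) \<partial>lborel_p p) < \<infinity>" by simp
  qed
  have FiC: "integrable (lborel_p p) (\<lambda>x. C * F x)" using Fi by simp
  show ?thesis
  proof (rule Bochner_Integration.integrable_bound[OF FiC gauss_meas[OF pd m]])
    show "AE x in lborel_p p. norm (gauss_dens p mu S x) \<le> norm (C * F x)"
    proof (rule AE_I2)
      fix z
      have x: "vec_of p z - mu \<in> carrier_vec p" using m by (auto simp: vec_of_def)
      have sq: "(\<Sum>k<p. ((vec_of p z - mu)$k)^2) = (\<Sum>k<p. (z k - mu$k)^2)"
        using m by (intro sum.cong refl) (auto simp: vec_of_def)
      have q: "quad (prec S) (vec_of p z - mu) \<ge> (\<Sum>k<p. (z k - mu$k)^2) / K"
        using K(2)[OF x] sq by simp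
      have "exp (- quad (prec S) (vec_of p z - mu) / 2) \<le> exp (- ((\<Sum>k<p. (z k - mu$k)^2) / K) / 2)"
        using q by simp
      also have "\<dots> = (\<Prod>k<p. exp (- ((z k - mu $ k)^2) / (2 * \<sigma>^2)))"
        unfolding s2 by (simp add: exp_sum[symmetric] sum_divide_distrib sum_negf field_simps)
      also have "\<dots> = (\<Prod>k<p. sqrt (2 * pi * K) * normal_density (mu$k) \<sigma> (z k))"
        unfolding normal_density_def s2 using K by (intro prod.cong refl) auto
      also have "\<dots> = sqrt (2 * pi * K) ^ p * F z"
        by (simp add: F_def prod.distrib)
      finally have e: "exp (- quad (prec S) (vec_of p z - mu) / 2) \<le> sqrt (2 * pi * K) ^ p * F z" .
      have "gauss_dens p mu S z = exp (- quad (prec S) (vec_of p z - mu) / 2) / sqrt ((2 * pi) ^ p * det S)"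
        by (simp add: gauss_dens_def)
      also have "\<dots> \<le> sqrt (2 * pi * K) ^ p * F z / sqrt ((2 * pi) ^ p * det S)"
        using e d by (intro divide_right_mono) auto
      also have "\<dots> = C * F z" by (simp add: C_def)
      finally have le: "gauss_dens p mu S z \<le> C * F z" .
      have "gauss_dens p mu S z \<ge> 0" using d by (simp add: gauss_dens_def)
      thus "norm (gauss_dens p mu S z) \<le> norm (C * F z)" using le by simp
    qed
  qed
qed

lemma sum12: "(\<Sum>k\<in>{1::nat,2}. f k) = f 1 + f 2" by simp

lemma joint_emeasure:
  fixes P :: "(nat \<Rightarrow> real) \<Rightarrow> nat \<Rightarrow> bool" and p :: nat and pi1 pi2 :: real
    and mu1 mu2 :: "real vec" and S1 S2 :: "real mat"
  defines "a \<equiv> \<lambda>z. pi1 * gauss_dens p mu1 S1 z" and "b \<equiv> \<lambda>z. pi2 * gauss_dens p mu2 S2 z"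
  assumes am[measurable]: "a \<in> borel_measurable (lborel_p p)" and bm[measurable]: "b \<in> borel_measurable (lborel_p p)"
    and a0: "\<And>z. a z \<ge> 0" and b0: "\<And>z. b z \<ge> 0"
    and Pm[measurable]: "Measurable.pred (lborel_p p \<Otimes>\<^sub>M count_space {1,2}) (\<lambda>x. P (fst x) (snd x))"
  shows "emeasure (joint p pi1 pi2 mu1 mu2 S1 S2) {w \<in> space (joint p pi1 pi2 mu1 mu2 S1 S2). P (fst w) (snd w)}
    = (\<integral>\<^sup>+z. ennreal ((if P z 1 then a z else 0) + (if P z 2 then b z else 0)) \<partial>lborel_p p)"
proof -
  let ?M = "lborel_p p" and ?N = "count_space {1,2::nat}"
  let ?MN = "?M \<Otimes>\<^sub>M ?N"
  define w where "w = (\<lambda>x::(nat \<Rightarrow> real) \<times> nat. ennreal (if snd x = 1 then a (fst x) else b (fst x)))"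
  have pr: "Measurable.pred ?MN (\<lambda>x. snd x = 1)"
    by (rule measurable_compose[OF measurable_snd]) simp
  have wr: "(\<lambda>x. if snd x = 1 then a (fst x) else b (fst x)) \<in> borel_measurable ?MN"
    by (rule measurable_If[OF measurable_compose[OF measurable_fst am] measurable_compose[OF measurable_fst bm] pr[unfolded pred_def]])
  have wm[measurable]: "w \<in> borel_measurable ?MN" unfolding w_def
    by (rule measurable_compose[OF wr measurable_ennreal])
  have J: "joint p pi1 pi2 mu1 mu2 S1 S2 = density ?MN w"
    unfolding joint_def w_def a_def b_def by (simp add: case_prod_beta')
  define E where "E = {x \<in> space ?MN. P (fst x) (snd x)}"
  have Es[measurable]: "E \<in> sets ?MN" unfolding E_def by measurable
  have "emeasure (joint p pi1 pi2 mu1 mu2 S1 S2) {w \<in> space (joint p pi1 pi2 mu1 mu2 S1 S2). P (fst w) (snd w)}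
      = emeasure (density ?MN w) E" unfolding J E_def by simp
  also have "\<dots> = (\<integral>\<^sup>+x. w x * indicator E x \<partial>?MN)" by (rule emeasure_density[OF wm Es])
  also have "\<dots> = (\<integral>\<^sup>+z. \<integral>\<^sup>+k. w (z,k) * indicator E (z,k) \<partial>?N \<partial>?M)"
  proof -
    interpret N: sigma_finite_measure ?N by (rule sigma_finite_measure_count_space_finite) auto
    show ?thesis by (rule N.nn_integral_fst[symmetric]) measurable
  qed
  also have "\<dots> = (\<integral>\<^sup>+z. ennreal ((if P z 1 then a z else 0) + (if P z 2 then b z else 0)) \<partial>?M)"
  proof (rule nn_integral_cong)
    fix z assume z: "z \<in> space ?M"
    have "(\<integral>\<^sup>+k. w (z,k) * indicator E (z,k) \<partial>?N) = (\<Sum>k\<in>{1,2}. w (z,k) * indicator E (z,k))"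
      by (rule nn_integral_count_space_finite) auto
    also have "\<dots> = w (z,1) * indicator E (z,1) + w (z,2) * indicator E (z,2)" by (rule sum12)
    also have "\<dots> = ennreal ((if P z 1 then a z else 0) + (if P z 2 then b z else 0))"
      using z a0[of z] b0[of z] by (auto simp: E_def w_def indicator_def space_pair_measure ennreal_plus)
    finally show "(\<integral>\<^sup>+k. w (z,k) * indicator E (z,k) \<partial>?N) = ennreal ((if P z 1 then a z else 0) + (if P z 2 then b z else 0))" .
  qed
  finally show ?thesis .
qed

lemma key_ineq: fixes t \<delta> :: real
  assumes t: "0 \<le> t" "t \<le> \<delta>" and d: "\<delta> > 0"
  shows "(1 + t/2) * (1 - t/(4+\<delta>)) \<ge> 1 + t/(4+\<delta>)"
proof -
  have "(1 + t/2) * (1 - t/(4+\<delta>)) - (1 + t/(4+\<delta>)) = t * (\<delta> - t) / (2*(4+\<delta>))"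
  proof -
    have D: "4 + \<delta> \<noteq> 0" using d by simp
    have g: "\<And>D. D \<noteq> 0 \<Longrightarrow> (1 + t/2) * (1 - t/D) - (1 + t/D) = t * (D - 4 - t) / (2*D)"
      by (simp add: field_simps)
    show ?thesis using g[OF D] by simp
  qed
  also have "\<dots> \<ge> 0" using t d by (intro divide_nonneg_pos mult_nonneg_nonneg) auto
  finally show ?thesis by simp
qed

lemma ptw_bound: fixes a b Q t \<delta> :: real
  assumes a: "a > 0" and b: "b > 0" and ab: "a = b * exp (Q/2)" and t: "0 \<le> t" "t \<le> \<delta>" and d: "\<delta> > 0"
    and Qt: "\<not> \<bar>Q\<bar> < t"
  shows "t / (4+\<delta>) * (a + b) \<le> \<bar>a - b\<bar>"
proof -
  define k where "k = t / (4+\<delta>)"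
  define e where "e = exp (Q/2)"
  have k0: "0 \<le> k" unfolding k_def using t d by simp
  have k1: "k \<le> 1" unfolding k_def using t d by simp
  have K: "(1 + t/2) * (1 - k) \<ge> 1 + k" unfolding k_def by (rule key_ineq[OF t d])
  have e0: "e > 0" unfolding e_def by simp
  show ?thesis
  proof (cases "Q \<ge> t")
    case True
    have "e \<ge> exp (t/2)" unfolding e_def using True by simp
    moreover have "exp (t/2) \<ge> 1 + t/2" by (rule exp_ge_add_one_self)
    ultimately have e1: "e \<ge> 1 + t/2" by linarith
    have "e * (1 - k) \<ge> (1 + t/2) * (1 - k)" using e1 k1 by (intro mult_right_mono) auto
    hence "e * (1 - k) \<ge> 1 + k" using K by linarith
    hence "k * (e + 1) \<le> e - 1" by (simp add: algebra_simps)
    hence "b * (k * (e + 1)) \<le> b * (e - 1)" using b by (intro mult_left_mono) auto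
    moreover have "a - b = b * (e - 1)" using ab e_def by (simp add: algebra_simps)
    moreover have "a + b = b * (e + 1)" using ab e_def by (simp add: algebra_simps)
    ultimately show ?thesis unfolding k_def[symmetric] by (simp add: algebra_simps)
  next
    case False
    hence Qn: "Q \<le> -t" using Qt by linarith
    have "e \<le> exp (-t/2)" unfolding e_def using Qn by simp
    moreover have "exp (-t/2) * (1 + t/2) \<le> exp (-t/2) * exp (t/2)"
      by (intro mult_left_mono exp_ge_add_one_self) auto
    moreover have "exp (-t/2) * exp (t/2) = 1" by (simp add: exp_add[symmetric])
    moreover have "e * (1 + t/2) \<le> exp (-t/2) * (1 + t/2)"
      using \<open>e \<le> exp (-t/2)\<close> t by (intro mult_right_mono) auto
    ultimately have "e * (1 + t/2) \<le> 1" by linarith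
    hence "e * (1 + t/2) * (1 - k) \<le> 1 * (1 - k)" using k1 by (intro mult_right_mono) auto
    hence "e * (1 + t/2) * (1 - k) \<le> 1 - k" by simp
    hence "e * (1 + k) \<le> 1 - k" using K e0
      by (smt (z3) mult.assoc mult_left_mono)
    hence "k * (e + 1) \<le> 1 - e" by (simp add: algebra_simps)
    hence "b * (k * (e + 1)) \<le> b * (1 - e)" using b by (intro mult_left_mono) auto
    moreover have "\<bar>a - b\<bar> = b * (1 - e)"
    proof -
      have "e * k \<ge> 0" using k0 e0 by simp
      moreover have "e * (1 + k) = e + e * k" by (simp add: algebra_simps)
      ultimately have "e \<le> 1" using \<open>e * (1 + k) \<le> 1 - k\<close> k0 by linarith
      thus ?thesis using ab e_def b by (simp add: algebra_simps abs_if mult_le_cancel_left1)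
    qed
    moreover have "a + b = b * (e + 1)" using ab e_def by (simp add: algebra_simps)
    ultimately show ?thesis unfolding k_def[symmetric] by (simp add: algebra_simps)
  qed
qed

lemma conv_int:
  fixes M :: "'a measure" and J :: "'b measure"
  assumes g: "integrable M g" and hm: "h \<in> borel_measurable M" and h0: "\<And>z. 0 \<le> h z" and hg: "\<And>z. h z \<le> g z"
    and e: "emeasure J A = (\<integral>\<^sup>+z. ennreal (h z) \<partial>M)"
  shows "integrable M h" "measure J A = integral\<^sup>L M h"
proof -
  show hi: "integrable M h"
    by (rule Bochner_Integration.integrable_bound[OF g hm]) (use h0 hg in \<open>auto intro!: AE_I2 order_trans[OF _ abs_ge_self]\<close>)
  have "emeasure J A = ennreal (integral\<^sup>L M h)" unfolding e
    by (rule nn_integral_eq_integral[OF hi]) (use h0 in auto)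
  thus "measure J A = integral\<^sup>L M h" unfolding measure_def using Bochner_Integration.integral_nonneg[of M h] h0 by simp
qed

lemma dist_bound:
  fixes J :: "'a measure" and X :: "'a \<Rightarrow> real" and f :: "real \<Rightarrow> ennreal"
  assumes fd: "distributed J lborel X f" and fs: "(SUP x\<in>{-\<delta>0<..<\<delta>0}. f x) < ennreal M2"
    and t: "0 \<le> t" "t \<le> \<delta>0" and M2: "M2 > 0"
  shows "emeasure J {w \<in> space J. \<bar>X w\<bar> < t} \<le> ennreal (2 * t * M2)"
proof -
  have Xm: "X \<in> measurable J lborel" using fd by (simp add: distributed_def)
  have fm: "f \<in> borel_measurable lborel" using fd by (simp add: distributed_def)
  have de: "distr J lborel X = density lborel f" using fd by (simp add: distributed_def)
  let ?A = "{-t<..<t}"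
  have "{w \<in> space J. \<bar>X w\<bar> < t} = X -` ?A \<inter> space J" by auto
  hence "emeasure J {w \<in> space J. \<bar>X w\<bar> < t} = emeasure (distr J lborel X) ?A"
    by (simp add: emeasure_distr[OF Xm])
  also have "\<dots> = (\<integral>\<^sup>+x. f x * indicator ?A x \<partial>lborel)" unfolding de
    by (rule emeasure_density[OF fm]) simp
  also have "\<dots> \<le> (\<integral>\<^sup>+x. ennreal M2 * indicator ?A x \<partial>lborel)"
  proof (rule nn_integral_mono)
    fix x
    show "f x * indicator ?A x \<le> ennreal M2 * indicator ?A x"
    proof (cases "x \<in> ?A")
      case True
      hence "x \<in> {-\<delta>0<..<\<delta>0}" using t by auto
      hence "f x \<le> (SUP x\<in>{-\<delta>0<..<\<delta>0}. f x)" by (rule SUP_upper)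
      thus ?thesis using fs True by simp
    qed simp
  qed
  also have "\<dots> = ennreal M2 * emeasure lborel ?A" by (rule nn_integral_cmult_indicator) simp
  also have "\<dots> = ennreal (2 * t * M2)" using t M2
    by (simp add: ennreal_mult'[symmetric] mult.commute)
  finally show ?thesis .
qed

theorem lemma1:
  fixes M0 M1 \<delta>0 M2 c :: real
  assumes "M0 > 0" and "M1 > 1" and "\<delta>0 > 0" and "M2 > 0" and "0 < c" and "c < 1/2"
  shows "\<exists>c0 > 0. \<exists>C > 0. \<forall>p s1 s2 pi1 pi2 mu1 mu2 S1 S2 (G :: (nat \<Rightarrow> real) \<Rightarrow> nat).
     (pi1, pi2, mu1, mu2, S1, S2) \<in> Theta M0 M1 \<delta>0 M2 c p s1 s2 \<longrightarrow>
     G \<in> lborel_p p \<rightarrow>\<^sub>M count_space {1,2} \<longrightarrow>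
     Lrisk p pi1 pi2 mu1 mu2 S1 S2 G < c0 \<longrightarrow>
     (Lrisk p pi1 pi2 mu1 mu2 S1 S2 G)\<^sup>2 \<le>
       C * (mis_prob p pi1 pi2 mu1 mu2 S1 S2 G
            - mis_prob p pi1 pi2 mu1 mu2 S1 S2 (Gstar p pi1 pi2 mu1 mu2 S1 S2))"
proof -
  note d0 = \<open>\<delta>0 > 0\<close> and M2 = \<open>M2 > 0\<close> and c0 = \<open>0 < c\<close>
  define C where "C = 8 * M2 * (4 + \<delta>0)"
  have main: "(Lrisk p pi1 pi2 mu1 mu2 S1 S2 G)\<^sup>2 \<le>
       C * (mis_prob p pi1 pi2 mu1 mu2 S1 S2 G
            - mis_prob p pi1 pi2 mu1 mu2 S1 S2 (Gstar p pi1 pi2 mu1 mu2 S1 S2))"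
    if Th: "(pi1, pi2, mu1, mu2, S1, S2) \<in> Theta M0 M1 \<delta>0 M2 c p s1 s2"
      and Gm[measurable]: "G \<in> lborel_p p \<rightarrow>\<^sub>M count_space {1,2}"
      and Lc: "Lrisk p pi1 pi2 mu1 mu2 S1 S2 G < 4 * M2 * \<delta>0"
    for p s1 s2 pi1 pi2 mu1 mu2 S1 S2 and G :: "(nat \<Rightarrow> real) \<Rightarrow> nat"
  proof -
    let ?M = "lborel_p p" and ?J = "joint p pi1 pi2 mu1 mu2 S1 S2"
    have m1: "mu1 \<in> carrier_vec p" and m2: "mu2 \<in> carrier_vec p" and pd1: "pos_def p S1" and pd2: "pos_def p S2"
      and pi1: "pi1 > 0" and pi2: "pi2 > 0"
      using Th c0 unfolding Theta_def by auto
    obtain f where fd: "distributed ?J lborel (\<lambda>w. Qfun p pi1 pi2 mu1 mu2 S1 S2 (fst w)) f"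
      and fs: "(SUP x\<in>{-\<delta>0<..<\<delta>0}. f x) < ennreal M2"
      using Th unfolding Theta_def by auto
    define a where "a z = pi1 * gauss_dens p mu1 S1 z" for z
    define b where "b z = pi2 * gauss_dens p mu2 S2 z" for z
    define Q where "Q z = Qfun p pi1 pi2 mu1 mu2 S1 S2 z" for z
    define Gs where "Gs = Gstar p pi1 pi2 mu1 mu2 S1 S2"
    note GR = gauss_ratio[OF pd1 pd2 m1 m2 pi1 pi2]
    have a0: "a z > 0" and b0: "b z > 0" and ab: "a z = b z * exp (Q z / 2)" for z
      using GR[of z] by (auto simp: a_def b_def Q_def)
    have am[measurable]: "a \<in> borel_measurable ?M" unfolding a_def[abs_def]
      using gauss_meas[OF pd1 m1] by simp
    have bm[measurable]: "b \<in> borel_measurable ?M" unfolding b_def[abs_def]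
      using gauss_meas[OF pd2 m2] by simp
    have ai: "integrable ?M a" unfolding a_def[abs_def] using gauss_integrable[OF pd1 m1] by simp
    have bi: "integrable ?M b" unfolding b_def[abs_def] using gauss_integrable[OF pd2 m2] by simp
    have gi: "integrable ?M (\<lambda>z. a z + b z)" using ai bi by simp
    have Qm[measurable]: "Q \<in> borel_measurable ?M"
    proof -
      have "Q = (\<lambda>z. qk p mu2 S2 z - qk p mu1 S1 z - ln (det S1 / det S2) + 2 * ln (pi1 / pi2))"
        unfolding Q_def[abs_def] by (simp add: Q_id[OF pd1 pd2 m1 m2])
      thus ?thesis using qk_meas[OF prec_props(1)[OF pd1] m1] qk_meas[OF prec_props(1)[OF pd2] m2] by simp
    qed
    have Gs_def': "Gs z = (if Q z > 0 then 1 else 2)" for z unfolding Gs_def Q_def Gstar_def by simp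
    have Gsm[measurable]: "Gs \<in> ?M \<rightarrow>\<^sub>M count_space {1,2}"
      unfolding Gs_def'[abs_def] by measurable
    have Gin: "G z \<in> {1,2}" if "z \<in> space ?M" for z using measurable_space[OF Gm that] by simp
    have Gsab: "Gs z = 1 \<longleftrightarrow> a z > b z" for z
    proof -
      have "a z > b z \<longleftrightarrow> exp (Q z / 2) > 1" using ab[of z] b0[of z] by simp
      also have "\<dots> \<longleftrightarrow> Q z > 0" by simp
      finally show ?thesis unfolding Gs_def' by auto
    qed
    note JE = joint_emeasure[of pi1 p mu1 S1 pi2 mu2 S2, folded a_def b_def, OF am bm less_imp_le[OF a0] less_imp_le[OF b0]]
    have pL: "Measurable.pred (?M \<Otimes>\<^sub>M count_space {1,2::nat}) (\<lambda>x. G (fst x) \<noteq> Gs (fst x))"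
    proof -
      have p2: "Measurable.pred (?M \<Otimes>\<^sub>M count_space {1,2::nat}) (\<lambda>x. if Q (fst x) > 0 then G (fst x) \<noteq> 1 else G (fst x) \<noteq> 2)"
        by measurable
      thus ?thesis by (simp add: Gs_def' if_distrib cong: if_cong)
    qed
    have pG: "Measurable.pred (?M \<Otimes>\<^sub>M count_space {1,2::nat}) (\<lambda>x. G (fst x) \<noteq> snd x)"
    proof -
      have p2: "Measurable.pred (?M \<Otimes>\<^sub>M count_space {1,2::nat}) (\<lambda>x. \<not> ((G (fst x) = 1 \<and> snd x = 1) \<or> (G (fst x) = 2 \<and> snd x = 2)))"
        by measurable
      have "{x \<in> space (?M \<Otimes>\<^sub>M count_space {1,2::nat}). G (fst x) \<noteq> snd x}
          = {x \<in> space (?M \<Otimes>\<^sub>M count_space {1,2::nat}). \<not> ((G (fst x) = 1 \<and> snd x = 1) \<or> (G (fst x) = 2 \<and> snd x = 2))}"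
        using Gin by (auto simp: space_pair_measure)
      thus ?thesis using p2 unfolding pred_def by simp
    qed
    have pS: "Measurable.pred (?M \<Otimes>\<^sub>M count_space {1,2::nat}) (\<lambda>x. Gs (fst x) \<noteq> snd x)"
    proof -
      have p2: "Measurable.pred (?M \<Otimes>\<^sub>M count_space {1,2::nat}) (\<lambda>x. if Q (fst x) > 0 then 1 \<noteq> snd x else 2 \<noteq> snd x)"
        by measurable
      thus ?thesis by (simp add: Gs_def' if_distrib cong: if_cong)
    qed
    define L where "L = Lrisk p pi1 pi2 mu1 mu2 S1 S2 G"
    define cL where "cL z = (if Q z > 0 then G z \<noteq> 1 else G z \<noteq> 2)" for z
    have cL_eq: "cL z = (G z \<noteq> Gs z)" for z unfolding cL_def Gs_def' by auto
    define hL where "hL z = (if cL z then a z else 0) + (if cL z then b z else 0)" for z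
    define eG where "eG z = (if G z \<noteq> 1 then a z else 0) + (if G z \<noteq> 2 then b z else 0)" for z
    define eS where "eS z = (if Gs z \<noteq> 1 then a z else 0) + (if Gs z \<noteq> 2 then b z else 0)" for z
    have hLm: "hL \<in> borel_measurable ?M" unfolding hL_def cL_def by measurable
    have eGm: "eG \<in> borel_measurable ?M" unfolding eG_def by measurable
    have eSm: "eS \<in> borel_measurable ?M" unfolding eS_def by measurable
    have pL': "Measurable.pred (?M \<Otimes>\<^sub>M count_space {1,2::nat}) (\<lambda>x. cL (fst x))"
      using pL by (simp add: cL_eq)
    have LE: "emeasure ?J {w \<in> space ?J. G (fst w) \<noteq> Gs (fst w)} = (\<integral>\<^sup>+z. ennreal (hL z) \<partial>?M)"
      using JE[of "\<lambda>z k. cL z", OF pL'] by (simp add: hL_def cL_eq)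
    have GE: "emeasure ?J {w \<in> space ?J. G (fst w) \<noteq> snd w} = (\<integral>\<^sup>+z. ennreal (eG z) \<partial>?M)"
      using JE[of "\<lambda>z k. G z \<noteq> k", OF pG] by (simp add: eG_def)
    have SE: "emeasure ?J {w \<in> space ?J. Gs (fst w) \<noteq> snd w} = (\<integral>\<^sup>+z. ennreal (eS z) \<partial>?M)"
      using JE[of "\<lambda>z k. Gs z \<noteq> k", OF pS] by (simp add: eS_def)
    have hL0: "0 \<le> hL z" "hL z \<le> a z + b z" for z using a0[of z] b0[of z] by (auto simp: hL_def)
    have eG0: "0 \<le> eG z" "eG z \<le> a z + b z" for z using a0[of z] b0[of z] by (auto simp: eG_def)
    have eS0: "0 \<le> eS z" "eS z \<le> a z + b z" for z using a0[of z] b0[of z] by (auto simp: eS_def)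
    note CL = conv_int[OF gi hLm hL0 LE] and CG = conv_int[OF gi eGm eG0 GE] and CS = conv_int[OF gi eSm eS0 SE]
    have Lint: "L = integral\<^sup>L ?M hL" unfolding L_def Lrisk_def Gs_def[symmetric] by (rule CL(2))
    have mG: "mis_prob p pi1 pi2 mu1 mu2 S1 S2 G = integral\<^sup>L ?M eG" unfolding mis_prob_def by (rule CG(2))
    have mS: "mis_prob p pi1 pi2 mu1 mu2 S1 S2 (Gstar p pi1 pi2 mu1 mu2 S1 S2) = integral\<^sup>L ?M eS"
      unfolding mis_prob_def Gs_def[symmetric] by (rule CS(2))
    have L0: "L \<ge> 0" unfolding Lint using hL0 by (simp add: Bochner_Integration.integral_nonneg)
    define t where "t = L / (4 * M2)"
    have t0: "0 \<le> t" unfolding t_def using L0 M2 by simp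
    have td: "t \<le> \<delta>0" unfolding t_def using Lc M2 unfolding L_def by (simp add: field_simps)
    define hB where "hB z = (if \<bar>Q z\<bar> < t then a z else 0) + (if \<bar>Q z\<bar> < t then b z else 0)" for z
    have hBm: "hB \<in> borel_measurable ?M" unfolding hB_def by measurable
    have pB: "Measurable.pred (?M \<Otimes>\<^sub>M count_space {1,2::nat}) (\<lambda>x. \<bar>Q (fst x)\<bar> < t)" by measurable
    have BE: "emeasure ?J {w \<in> space ?J. \<bar>Q (fst w)\<bar> < t} = (\<integral>\<^sup>+z. ennreal (hB z) \<partial>?M)"
      using JE[of "\<lambda>z k. \<bar>Q z\<bar> < t", OF pB] by (simp add: hB_def)
    have hB0: "0 \<le> hB z" "hB z \<le> a z + b z" for z using a0[of z] b0[of z] by (auto simp: hB_def)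
    note CB = conv_int[OF gi hBm hB0 BE]
    have Bb: "emeasure ?J {w \<in> space ?J. \<bar>Q (fst w)\<bar> < t} \<le> ennreal (2 * t * M2)"
      using dist_bound[OF fd fs t0 td M2] unfolding Q_def .
    have PB: "integral\<^sup>L ?M hB \<le> 2 * t * M2"
    proof -
      have "measure ?J {w \<in> space ?J. \<bar>Q (fst w)\<bar> < t} \<le> enn2real (ennreal (2 * t * M2))"
        unfolding measure_def by (rule enn2real_mono[OF Bb]) simp
      thus ?thesis using CB(2) t0 M2 by simp
    qed
    define k where "k = t / (4 + \<delta>0)"
    have k0: "k \<ge> 0" unfolding k_def using t0 d0 by simp
    have ptw: "eG z - eS z \<ge> k * (hL z - hB z)" if z: "z \<in> space ?M" for z
    proof -
      have Gz: "G z \<in> {1,2}" using Gin[OF z] .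
      have Gsz: "Gs z \<in> {1,2}" unfolding Gs_def' by simp
      have diff: "eG z - eS z = (if G z \<noteq> Gs z then \<bar>a z - b z\<bar> else 0)"
        using Gz Gsz Gsab[of z] by (auto simp: eG_def eS_def)
      show ?thesis
      proof (cases "G z \<noteq> Gs z")
        case True
        show ?thesis
        proof (cases "\<bar>Q z\<bar> < t")
          case True2: True
          have "hL z - hB z \<le> 0" using True True2 by (simp add: hL_def hB_def cL_eq)
          hence kk: "k * (hL z - hB z) \<le> 0" using k0 by (simp add: mult_nonneg_nonpos)
          have "eG z - eS z = \<bar>a z - b z\<bar>" using diff True by simp
          thus ?thesis using kk abs_ge_zero[of "a z - b z"] by linarith
        next
          case False2: False
          have "k * (a z + b z) \<le> \<bar>a z - b z\<bar>" unfolding k_def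
            by (rule ptw_bound[OF a0 b0 ab t0 td d0 False2])
          moreover have "hL z - hB z = a z + b z" using True False2 by (simp add: hL_def hB_def cL_eq)
          ultimately show ?thesis unfolding diff using True by simp
        qed
      next
        case False
        have "hL z - hB z \<le> 0" using False hB0[of z] by (simp add: hL_def cL_eq)
        hence "k * (hL z - hB z) \<le> 0" using k0 by (simp add: mult_nonneg_nonpos)
        thus ?thesis unfolding diff using False by simp
      qed
    qed
    have Eb: "integral\<^sup>L ?M eG - integral\<^sup>L ?M eS \<ge> k * (L - integral\<^sup>L ?M hB)"
    proof -
      have "k * (L - integral\<^sup>L ?M hB) = integral\<^sup>L ?M (\<lambda>z. k * (hL z - hB z))"
        unfolding Lint using CL(1) CB(1) by simp
      also have "\<dots> \<le> integral\<^sup>L ?M (\<lambda>z. eG z - eS z)"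
        by (rule integral_mono) (use CL(1) CB(1) CG(1) CS(1) ptw in auto)
      also have "\<dots> = integral\<^sup>L ?M eG - integral\<^sup>L ?M eS" using CG(1) CS(1) by simp
      finally show ?thesis .
    qed
    have "k * (L - integral\<^sup>L ?M hB) \<ge> k * (L / 2)"
    proof (rule mult_left_mono[OF _ k0])
      have "2 * t * M2 = L / 2" unfolding t_def using M2 by (simp add: field_simps)
      thus "L / 2 \<le> L - integral\<^sup>L ?M hB" using PB by linarith
    qed
    moreover have "k * (L / 2) = L^2 / C" unfolding k_def t_def C_def using M2 d0
      by (simp add: field_simps power2_eq_square)
    ultimately have "integral\<^sup>L ?M eG - integral\<^sup>L ?M eS \<ge> L^2 / C" using Eb by linarith
    moreover have "C > 0" unfolding C_def using M2 d0 by simp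
    ultimately have "L^2 \<le> C * (integral\<^sup>L ?M eG - integral\<^sup>L ?M eS)"
      by (simp add: field_simps)
    thus ?thesis unfolding mG mS L_def[symmetric] .
  qed
  show ?thesis
    apply (rule exI[of _ "4 * M2 * \<delta>0"])
    apply (intro conjI)
     apply (use d0 M2 in simp)
    apply (rule exI[of _ C])
    apply (intro conjI)
     apply (use d0 M2 in \<open>simp add: C_def\<close>)
    using main by blast
qed

end
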